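(* Under the hypotheses and notation of the following setting: $T_t$ is the special flow over the dyadic odometer on $M=[0,1)^2$; $(p_n)$ are natural numbers with $p_{n+1}\ge p_n+2$; $d_n\in(0,1/2)$, $a_n>0$ with $\sum_{m>n}a_m=o(a_nd_n)$ and $2^{p_n-2}<d_m2^{p_m-1}$ for all $m>n$; $L_n=d_n2^{p_n-1}$; $f_n(u,v)=a_n$ for $0\le v<L_n$, $f_n(u,v)=-a_n$ for $2^{p_n-1}\le v<2^{p_n-1}+L_n$, $f_n=0$ otherwise, on $[0,2^{-p_n})\times[0,2^{p_n})$; $f=\sum_n f_n\circ\Phi_{p_n}^{-1}$; $t_n=2^{p_n-2}$. Then the bound $\mathcal{O}(a_nd_n)$ cannot be improved to $o(a_nd_n)$: there are sets $D_n\subset M$ with $m(D_n)=\frac12-d_n$ such that $\sup_{(x,y)\in D_n}\big|\,|A(f,t_n,(x,y))|-2a_nd_n\big|=o(a_nd_n)$ as $n\to\infty$.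
   Context: Dyadic odometer $S$ on $[0,1)$: on binary expansions $x=\sum x_i2^{-i}$ (not eventually all $1$), if $x_1=\dots=x_m=1$, $x_{m+1}=0$, then $S$ replaces these digits by $0,\dots,0,1$, others unchanged. Special flow: $T_t(x,y)=(S^{\lfloor y+t\rfloor}x,\ y+t-\lfloor y+t\rfloor)$ on $M=[0,1)^2$ with Lebesgue measure $m$. $\Phi_p(u,v)=T_v(u,0)$ for $(u,v)\in[0,2^{-p})\times[0,2^p)$ is a measure-preserving bijection onto $M$ (mod 0). $A(f,t,z)=\frac1t\int_0^tf(T_sz)\,ds$. *)

theory Defs
  imports "HOL-Analysis.Analysis" "HOL-Library.Landau_Symbols"
begin

text \<open>i-th binary digit (i \<ge> 1) of x in [0,1), the expansion not ending in all 1s.\<close>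
definition bdigit :: "nat \<Rightarrow> real \<Rightarrow> int" where
  "bdigit i x = \<lfloor>2 ^ i * x\<rfloor> mod 2"

text \<open>Dyadic odometer: if x_1 = ... = x_m = 1 and x_(m+1) = 0, these digits
  are replaced by 0,...,0,1.\<close>
definition odometer :: "real \<Rightarrow> real" where
  "odometer x = (let m = (LEAST m. bdigit (Suc m) x = 0)
                 in x - (\<Sum>i=1..m. (1/2) ^ i) + (1/2) ^ Suc m)"

text \<open>Special flow T_t(x,y) = (S^floor(y+t) x, frac(y+t)) (used for t \<ge> 0).\<close>
definition flow :: "real \<Rightarrow> real \<times> real \<Rightarrow> real \<times> real" where
  "flow t z = ((odometer ^^ nat \<lfloor>snd z + t\<rfloor>) (fst z), frac (snd z + t))"

definition M :: "(real \<times> real) set" where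
  "M = {0..<1} \<times> {0..<1}"

definition Phi :: "nat \<Rightarrow> real \<times> real \<Rightarrow> real \<times> real" where
  "Phi p w = flow (snd w) (fst w, 0)"

definition PhiDom :: "nat \<Rightarrow> (real \<times> real) set" where
  "PhiDom p = {0..<(1/2) ^ p} \<times> {0..<2 ^ p}"

definition Phi_inv :: "nat \<Rightarrow> real \<times> real \<Rightarrow> real \<times> real" where
  "Phi_inv p = inv_into (PhiDom p) (Phi p)"

definition avg :: "(real \<times> real \<Rightarrow> real) \<Rightarrow> real \<Rightarrow> real \<times> real \<Rightarrow> real" where
  "avg f t z = (1 / t) * (LINT s:{0..t}|lborel. f (flow s z))"

definition block :: "nat \<Rightarrow> real \<Rightarrow> real \<Rightarrow> real \<times> real \<Rightarrow> real" where
  "block p a d w =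
     (let u = fst w; v = snd w; L = d * 2 powr (real p - 1) in
      if w \<in> PhiDom p \<and> 0 \<le> v \<and> v < L then a
      else if w \<in> PhiDom p \<and> 2 powr (real p - 1) \<le> v \<and> v < 2 powr (real p - 1) + L then - a
      else 0)"

definition bigf :: "(nat \<Rightarrow> nat) \<Rightarrow> (nat \<Rightarrow> real) \<Rightarrow> (nat \<Rightarrow> real) \<Rightarrow> real \<times> real \<Rightarrow> real" where
  "bigf p a d z = (\<Sum>n. block (p n) (a n) (d n) (Phi_inv (p n) z))"

end

theory Submission
  imports Defs
begin


lemma bdigit_1: assumes "0 \<le> x" "x < 1" shows "bdigit 1 x = (if x < 1/2 then 0 else 1)"
proof -
  have "\<lfloor>2 * x\<rfloor> = (if x < 1/2 then 0 else 1)"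
    using assms by (auto simp: floor_eq_iff)
  then show ?thesis by (simp add: bdigit_def)
qed

lemma bdigit_shift: assumes "1/2 \<le> x"
  shows "bdigit (Suc i) (2*x-1) = bdigit (Suc (Suc i)) x"
proof -
  have "2 ^ Suc i * (2*x-1) = 2 ^ Suc (Suc i) * x - of_int (2 ^ Suc i)" by (simp add: algebra_simps)
  then have "\<lfloor>2 ^ Suc i * (2*x-1)\<rfloor> = \<lfloor>2 ^ Suc (Suc i) * x\<rfloor> - 2 ^ Suc i"
    by (metis floor_diff_of_int)
  moreover have "(k - 2 ^ Suc i) mod 2 = k mod 2" for k :: int
    by (simp add: mod_diff_right_eq[symmetric])
  ultimately show ?thesis by (simp add: bdigit_def)
qed

lemma all_ones_bound:
  "\<And>x. 0 \<le> x \<Longrightarrow> x < 1 \<Longrightarrow> (\<forall>j<i. bdigit (Suc j) x = 1) \<Longrightarrow> 1 - (1/2)^i \<le> x"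
proof (induction i)
  case 0 then show ?case by simp
next
  case (Suc i)
  have d1: "bdigit 1 x = 1" using Suc.prems(3) by auto
  then have h: "1/2 \<le> x" using bdigit_1[OF Suc.prems(1,2)] by (auto split: if_splits)
  have "\<forall>j<i. bdigit (Suc j) (2*x-1) = 1"
    using Suc.prems(3) bdigit_shift[OF h] by auto
  then have "1 - (1/2)^i \<le> 2*x-1" using Suc.IH[of "2*x-1"] h Suc.prems by auto
  then show ?case by simp
qed

lemma digit_zero_exists: assumes "0 \<le> x" "x < 1" shows "\<exists>m. bdigit (Suc m) x = 0"
proof (rule ccontr)
  assume "\<not> ?thesis"
  then have all: "\<forall>j. bdigit (Suc j) x = 1"
    by (auto simp: bdigit_def)
  obtain i where i: "(1/2::real)^i < 1 - x"
    using real_arch_pow_inv[of "1-x" "1/2"] assms by auto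
  have "1 - (1/2)^i \<le> x" using all_ones_bound[OF assms, of i] all by auto
  with i show False by simp
qed

lemma least_shift: assumes "1/2 \<le> x" "x < 1"
  shows "(LEAST m. bdigit (Suc m) x = 0) = Suc (LEAST m. bdigit (Suc m) (2*x-1) = 0)"
proof -
  obtain m where m: "bdigit (Suc m) x = 0" using digit_zero_exists assms by fastforce
  have "bdigit 1 x \<noteq> 0" using bdigit_1 assms by auto
  then have "(LEAST m. bdigit (Suc m) x = 0) = Suc (LEAST m. bdigit (Suc (Suc m)) x = 0)"
    using Least_Suc[of "\<lambda>m. bdigit (Suc m) x = 0" m] m by auto
  also have "\<dots> = Suc (LEAST m. bdigit (Suc m) (2*x-1) = 0)"
    using bdigit_shift[OF assms(1)] by simp
  finally show ?thesis .
qed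

lemma geom_half: "(\<Sum>i=1..m. (1/2::real)^i) = 1 - (1/2)^m"
  by (induction m) (auto simp: sum.atLeast1_atMost_eq)

lemma odometer_formula: "odometer x = (let m = (LEAST m. bdigit (Suc m) x = 0) in x - 1 + (1/2)^m + (1/2)^Suc m)"
  unfolding odometer_def Let_def geom_half by simp

lemma odometer_rec: assumes "0 \<le> x" "x < 1"
  shows "odometer x = (if x < 1/2 then x + 1/2 else odometer (2*x-1) / 2)"
proof (cases "x < 1/2")
  case True
  then have "bdigit 1 x = 0" using bdigit_1 assms by auto
  then have "(LEAST m. bdigit (Suc m) x = 0) = 0" by (intro Least_eq_0) simp
  then show ?thesis using True by (simp add: odometer_formula)
next
  case False
  then show ?thesis using least_shift[of x] assms
    by (simp add: odometer_formula Let_def field_simps)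
qed

lemma odometer_range_aux:
  "\<And>x. 0 \<le> x \<Longrightarrow> x < 1 \<Longrightarrow> (LEAST m. bdigit (Suc m) x = 0) = k \<Longrightarrow> 0 \<le> odometer x \<and> odometer x < 1"
proof (induction k)
  case 0
  then show ?case using least_shift[of x] odometer_rec[of x] by (cases "x < 1/2") auto
next
  case (Suc k)
  then have h: "\<not> x < 1/2" using odometer_rec[of x] bdigit_1[of x]
    by (metis Least_eq_0 One_nat_def nat.distinct(1))
  then have "(LEAST m. bdigit (Suc m) (2*x-1) = 0) = k" using least_shift[of x] Suc.prems by simp
  then have "0 \<le> odometer (2*x-1) \<and> odometer (2*x-1) < 1" using Suc.IH[of "2*x-1"] Suc.prems h by auto
  then show ?case using odometer_rec[of x] Suc.prems h by auto
qed

lemma odometer_range: "0 \<le> x \<Longrightarrow> x < 1 \<Longrightarrow> 0 \<le> odometer x \<and> odometer x < 1"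
  using odometer_range_aux by blast



lemma funpow_range: "0 \<le> x \<Longrightarrow> x < 1 \<Longrightarrow> 0 \<le> (odometer^^k) x \<and> (odometer^^k) x < 1"
  by (induction k) (auto simp: odometer_range)

lemma S2: assumes "0 \<le> w" "w < 1/2" shows "(odometer^^2) w = odometer (2*w) / 2"
proof -
  have "odometer w = w + 1/2" using odometer_rec[of w] assms by auto
  moreover have "odometer (w + 1/2) = odometer (2*w) / 2" using odometer_rec[of "w+1/2"] assms
    by (auto simp: algebra_simps)
  ultimately show ?thesis by (simp add: numeral_2_eq_2)
qed

lemma S_even: assumes "0 \<le> u" "u < 1/2" shows "(odometer^^(2*j)) u = (odometer^^j) (2*u) / 2"
proof (induction j)
  case 0 then show ?case by simp
next
  case (Suc j)
  have r: "0 \<le> (odometer^^j) (2*u) \<and> (odometer^^j) (2*u) < 1" using funpow_range assms by auto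
  have "(odometer^^(2*Suc j)) u = (odometer^^2) ((odometer^^(2*j)) u)"
    by (metis funpow_add mult_Suc_right add.commute o_apply)
  also have "\<dots> = (odometer^^2) ((odometer^^j) (2*u) / 2)"
    by (simp only: Suc.IH)
  also have "\<dots> = odometer (2 * ((odometer^^j) (2*u) / 2)) / 2"
    using S2[of "(odometer^^j) (2*u) / 2"] r by simp
  also have "\<dots> = (odometer^^Suc j) (2*u) / 2" by simp
  finally show ?case .
qed

fun Cr :: "nat \<Rightarrow> nat \<Rightarrow> nat" where
  "Cr 0 k = 0"
| "Cr (Suc p) k = Cr p (k div 2) + (k mod 2) * 2^p"

lemma Cr_lt: "Cr p k < 2^p"
proof (induction p arbitrary: k)
  case 0 then show ?case by simp
next
  case (Suc p)
  have "Cr p (k div 2) < 2^p" by (rule Suc.IH)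
  moreover have "k mod 2 \<le> 1" by simp
  ultimately have "Cr p (k div 2) + (k mod 2) * 2^p < 2^p + 1 * 2^p"
    by (metis add_less_le_mono mult_le_mono1)
  then show ?case by simp
qed

lemma S_pow: "\<And>u k. 0 \<le> u \<Longrightarrow> u < (1/2)^p \<Longrightarrow> k < 2^p \<Longrightarrow>
   (odometer^^k) u = u + real (Cr p k) / 2^p"
proof (induction p)
  case 0 then show ?case by simp
next
  case (Suc p)
  define j where "j = k div 2"
  have kk: "k = k mod 2 + 2*j" unfolding j_def by simp
  have "(1/2::real)^Suc p \<le> 1/2" by (simp add: power_le_one)
  then have u2: "u < 1/2" using Suc.prems(2) by linarith
  have j: "j < 2^p" using Suc.prems(3) unfolding j_def by auto
  have u2p: "2*u < (1/2)^p" using Suc.prems(2) by simp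
  have "(odometer^^(2*j)) u = (odometer^^j) (2*u) / 2" using S_even Suc.prems u2 by auto
  also have "\<dots> = (2*u + real (Cr p j) / 2^p) / 2"
    using Suc.IH[of "2*u" j] Suc.prems(1) u2p j by simp
  also have "\<dots> = u + real (Cr p j) / 2^Suc p" by (simp add: add_divide_distrib)
  finally have e: "(odometer^^(2*j)) u = u + real (Cr p j) / 2^Suc p" .
  have "Cr p j + 1 \<le> 2^p" using Cr_lt[of p j] by simp
  then have "real (Cr p j + 1) \<le> real (2^p)" by (simp only: of_nat_le_iff)
  then have c1: "real (Cr p j) + 1 \<le> 2^p" by simp
  have "u * 2^Suc p < 1" using Suc.prems(2) by (simp add: power_divide field_simps)
  then have "u * 2^Suc p + real (Cr p j) < 2^p" using c1 by simp
  then have "(u * 2^Suc p + real (Cr p j)) / 2^Suc p < 2^p / 2^Suc p"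
    by (simp add: divide_strict_right_mono)
  then have lt: "u + real (Cr p j) / 2^Suc p < 1/2"
    by (simp add: add_divide_distrib)
  have cs: "Cr (Suc p) k = Cr p j + (k mod 2) * 2^p" unfolding j_def by simp
  show ?case
  proof (cases "k mod 2 = 0")
    case True
    then show ?thesis using e kk cs by (metis add_0 add_cancel_right_right mult_zero_left)
  next
    case False
    then have b1: "k mod 2 = 1" by simp
    have "(odometer^^k) u = odometer ((odometer^^(2*j)) u)" using kk b1 by (metis funpow.simps(2) o_apply plus_1_eq_Suc)
    also have "\<dots> = u + real (Cr p j) / 2^Suc p + 1/2" using e lt odometer_rec[of "u + real (Cr p j) / 2^Suc p"] Suc.prems
      by simp
    also have "\<dots> = u + real (Cr (Suc p) k) / 2^Suc p" using cs b1 by (simp add: add_divide_distrib)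
    finally show ?thesis .
  qed
qed

lemma S_period: "\<And>u. 0 \<le> u \<Longrightarrow> u < (1/2)^p \<Longrightarrow> (odometer^^(2^p)) u = odometer (2^p * u) / 2^p"
proof (induction p)
  case 0 then show ?case by simp
next
  case (Suc p)
  have "(1/2::real)^Suc p \<le> 1/2" by (simp add: power_le_one)
  then have u2: "u < 1/2" using Suc.prems(2) by linarith
  have "(odometer^^(2^Suc p)) u = (odometer^^(2^p)) (2*u) / 2" using S_even[of u "2^p"] Suc.prems u2
    by (simp add: mult.commute)
  also have "\<dots> = odometer (2^p * (2*u)) / 2^p / 2" using Suc.IH[of "2*u"] Suc.prems
    by (simp add: field_simps)
  finally show ?case by (simp add: field_simps)
qed

lemma S_period_range: assumes "0 \<le> u" "u < (1/2)^p"
  shows "0 \<le> (odometer^^(2^p)) u \<and> (odometer^^(2^p)) u < (1/2)^p"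
proof -
  have "0 \<le> 2^p * u" "2^p * u < 1" using assms by (auto simp: field_simps power_divide)
  then have "0 \<le> odometer (2^p * u) \<and> odometer (2^p * u) < 1" using odometer_range by blast
  then have "0 \<le> odometer (2^p * u) / 2^p \<and> odometer (2^p * u) / 2^p < 1 / 2^p"
    by (simp add: divide_strict_right_mono)
  then show ?thesis using S_period[OF assms] by (simp add: power_divide)
qed

lemma S_period_iter: assumes "0 \<le> u" "u < (1/2)^p"
  shows "0 \<le> ((odometer^^(2^p))^^q) u \<and> ((odometer^^(2^p))^^q) u < (1/2)^p"
  by (induction q) (use assms S_period_range in auto)

lemma Cr_inj: "inj_on (Cr p) {..<2^p}"
proof (induction p)
  case 0 then show ?case by (simp add: inj_on_def)
next
  case (Suc p)
  show ?case
  proof (rule inj_onI)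
    fix k k' assume k: "k \<in> {..<2^Suc p}" and k': "k' \<in> {..<2^Suc p}" and e: "Cr (Suc p) k = Cr (Suc p) k'"
    have l1: "Cr p (k div 2) < 2^p" "Cr p (k' div 2) < 2^p" by (rule Cr_lt)+
    have "k mod 2 = k' mod 2"
    proof (rule ccontr)
      assume "k mod 2 \<noteq> k' mod 2"
      then have "k mod 2 = 0 \<and> k' mod 2 = 1 \<or> k mod 2 = 1 \<and> k' mod 2 = 0" by auto
      then show False using e l1 by auto
    qed
    moreover have "Cr p (k div 2) = Cr p (k' div 2)" using e calculation by simp
    moreover have "k div 2 < 2^p" "k' div 2 < 2^p" using k k' by auto
    ultimately have "k div 2 = k' div 2" "k mod 2 = k' mod 2" using Suc.IH by (auto dest: inj_onD)
    then show "k = k'" by (metis div_mult_mod_eq)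
  qed
qed

lemma Cr_surj: "Cr p ` {..<2^p} = {..<2^p}"
  using endo_inj_surj[of "{..<(2::nat)^p}" "Cr p"] Cr_inj Cr_lt by auto



definition pm :: "nat \<Rightarrow> real \<Rightarrow> real" where
  "pm p r = r - 2^p * \<lfloor>r / 2^p\<rfloor>"

lemma pm_range: "0 \<le> pm p r \<and> pm p r < 2^p"
proof -
  have a: "real_of_int \<lfloor>r / 2^p\<rfloor> \<le> r / 2^p" "r / 2^p < real_of_int \<lfloor>r / 2^p\<rfloor> + 1" by linarith+
  have "2^p * real_of_int \<lfloor>r / 2^p\<rfloor> \<le> 2^p * (r / 2^p)" by (intro mult_left_mono a) auto
  moreover have "2^p * (r / 2^p) < 2^p * (real_of_int \<lfloor>r / 2^p\<rfloor> + 1)" by (intro mult_strict_left_mono a) auto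
  ultimately show ?thesis unfolding pm_def by (simp add: algebra_simps)
qed

lemma nat_floor_lt: assumes "0 \<le> v" "v < 2^p" shows "nat \<lfloor>v\<rfloor> < 2^p"
proof -
  have "\<lfloor>v\<rfloor> < 2^p" using floor_less_iff[of v "2^p"] assms by simp
  then show ?thesis using assms by (simp add: nat_less_iff)
qed

lemma Phi_formula: assumes "(u,v) \<in> PhiDom p"
  shows "Phi p (u,v) = (u + real (Cr p (nat \<lfloor>v\<rfloor>)) / 2^p, frac v)"
proof -
  have u: "0 \<le> u" "u < (1/2)^p" and v: "0 \<le> v" "v < 2^p" using assms by (auto simp: PhiDom_def)
  have "nat \<lfloor>v\<rfloor> < 2^p" using v nat_floor_lt by blast
  then show ?thesis using S_pow[OF u] by (simp add: Phi_def flow_def)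
qed

lemma flow_Phi: assumes "(u,v) \<in> PhiDom p" "0 \<le> s"
  shows "\<exists>u'. flow s (Phi p (u,v)) = Phi p (u', pm p (v+s)) \<and> (u', pm p (v+s)) \<in> PhiDom p"
proof -
  have u: "0 \<le> u" "u < (1/2)^p" and v: "0 \<le> v" "v < 2^p" using assms by (auto simp: PhiDom_def)
  define q where "q = \<lfloor>(v+s) / 2^p\<rfloor>"
  define r where "r = pm p (v+s)"
  have q0: "0 \<le> q" unfolding q_def using v assms by simp
  have r: "0 \<le> r" "r < 2^p" using pm_range unfolding r_def by auto
  have rq: "v + s = r + 2^p * q" unfolding r_def pm_def q_def by simp
  have "\<lfloor>v+s\<rfloor> = \<lfloor>r + of_int (2^p*q)\<rfloor>" using rq by simp
  also have "\<dots> = \<lfloor>r\<rfloor> + 2^p*q" by (rule floor_add_int[symmetric])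
  finally have fl: "\<lfloor>v+s\<rfloor> = \<lfloor>r\<rfloor> + 2^p * q" .
  have "frac (v+s) = frac (r + of_int (2^p*q))" using rq by simp
  then have fr: "frac (v+s) = frac r" by (simp only: frac_add_of_int_right)
  have "\<lfloor>frac v + s\<rfloor> + \<lfloor>v\<rfloor> = \<lfloor>frac v + s + of_int \<lfloor>v\<rfloor>\<rfloor>" by (rule floor_add_int)
  also have "frac v + s + of_int \<lfloor>v\<rfloor> = v + s" by (simp add: frac_def)
  finally have e1: "\<lfloor>frac v + s\<rfloor> + \<lfloor>v\<rfloor> = \<lfloor>v+s\<rfloor>" .
  have "frac v + s = (v + s) + of_int (- \<lfloor>v\<rfloor>)" by (simp add: frac_def)
  then have e2: "frac (frac v + s) = frac (v+s)" by (simp only: frac_add_of_int_right)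
  have nn: "0 \<le> \<lfloor>frac v + s\<rfloor>" "0 \<le> \<lfloor>v\<rfloor>" "0 \<le> \<lfloor>r\<rfloor>" using v r assms frac_ge_0[of v] by simp_all
  have "int (nat \<lfloor>frac v + s\<rfloor> + nat \<lfloor>v\<rfloor>) = int (nat \<lfloor>r\<rfloor> + 2^p * nat q)"
    using nn q0 e1 fl by simp
  then have n1: "nat \<lfloor>frac v + s\<rfloor> + nat \<lfloor>v\<rfloor> = nat \<lfloor>r\<rfloor> + 2^p * nat q" by (simp only: of_nat_eq_iff)
  define u' where "u' = ((odometer^^(2^p))^^(nat q)) u"
  have u': "0 \<le> u'" "u' < (1/2)^p" using S_period_iter[OF u] unfolding u'_def by auto
  have "flow s (Phi p (u,v)) = ((odometer^^(nat \<lfloor>frac v + s\<rfloor> + nat \<lfloor>v\<rfloor>)) u, frac (frac v + s))"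
    by (simp add: Phi_def flow_def funpow_add)
  also have "\<dots> = ((odometer^^(nat \<lfloor>r\<rfloor>)) u', frac r)"
    unfolding n1 e2 fr u'_def by (simp add: funpow_add funpow_mult)
  also have "\<dots> = Phi p (u', r)" by (simp add: Phi_def flow_def)
  finally show ?thesis using u' r unfolding r_def by (auto simp: PhiDom_def)
qed

lemma Phi_inj: "inj_on (Phi p) (PhiDom p)"
proof (rule inj_onI)
  fix w w' assume w: "w \<in> PhiDom p" and w': "w' \<in> PhiDom p" and e: "Phi p w = Phi p w'"
  obtain u v where uv: "w = (u,v)" by force
  obtain u' v' where uv': "w' = (u',v')" by force
  have u: "0 \<le> u" "u < (1/2)^p" "0 \<le> v" "v < 2^p" using w uv by (auto simp: PhiDom_def)
  have u': "0 \<le> u'" "u' < (1/2)^p" "0 \<le> v'" "v' < 2^p" using w' uv' by (auto simp: PhiDom_def)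
  have kv: "nat \<lfloor>v\<rfloor> < 2^p" "nat \<lfloor>v'\<rfloor> < 2^p" using u u' nat_floor_lt by blast+
  have fv: "frac v = frac v'" and
    eu: "u + real (Cr p (nat \<lfloor>v\<rfloor>)) / 2^p = u' + real (Cr p (nat \<lfloor>v'\<rfloor>)) / 2^p"
    using e Phi_formula[of u v p] Phi_formula[of u' v' p] w w' uv uv' by auto
  have "2^p * u + real (Cr p (nat \<lfloor>v\<rfloor>)) = 2^p * u' + real (Cr p (nat \<lfloor>v'\<rfloor>))"
    using eu by (simp add: field_simps)
  moreover have "\<lfloor>2^p * u + real (Cr p (nat \<lfloor>v\<rfloor>))\<rfloor> = int (Cr p (nat \<lfloor>v\<rfloor>))"
    using u by (simp add: floor_eq_iff power_divide field_simps)
  moreover have "\<lfloor>2^p * u' + real (Cr p (nat \<lfloor>v'\<rfloor>))\<rfloor> = int (Cr p (nat \<lfloor>v'\<rfloor>))"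
    using u' by (simp add: floor_eq_iff power_divide field_simps)
  ultimately have c: "Cr p (nat \<lfloor>v\<rfloor>) = Cr p (nat \<lfloor>v'\<rfloor>)" by simp
  then have "nat \<lfloor>v\<rfloor> = nat \<lfloor>v'\<rfloor>" using Cr_inj[of p] kv by (auto dest: inj_onD)
  moreover have "\<lfloor>v\<rfloor> \<ge> 0" "\<lfloor>v'\<rfloor> \<ge> 0" using u u' by simp_all
  ultimately have "\<lfloor>v\<rfloor> = \<lfloor>v'\<rfloor>" using eq_nat_nat_iff by blast
  then have "v = v'" using fv by (metis frac_def diff_add_cancel)
  moreover have "u = u'" using eu c by simp
  ultimately show "w = w'" using uv uv' by simp
qed

lemma Phi_surj: assumes "z \<in> M" shows "\<exists>w\<in>PhiDom p. Phi p w = z"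
proof -
  obtain x y where z: "z = (x,y)" by force
  have xy: "0 \<le> x" "x < 1" "0 \<le> y" "y < 1" using assms z by (auto simp: M_def)
  define j where "j = nat \<lfloor>2^p * x\<rfloor>"
  have fj: "\<lfloor>2^p * x\<rfloor> = int j" unfolding j_def using xy by simp
  have "2^p * x < 2^p" using xy by simp
  then have "\<lfloor>2^p * x\<rfloor> < 2^p" using floor_less_iff[of "2^p*x" "2^p"] by simp
  then have j: "j < 2^p" using fj by simp
  obtain k where k: "k < 2^p" "Cr p k = j" using Cr_surj[of p] j by (metis imageE lessThan_iff)
  define u where "u = x - real j / 2^p"
  have "real j \<le> 2^p * x" "2^p * x < real j + 1" using fj by linarith+
  then have "(2^p * x - real j) / 2^p < 1 / 2^p" "0 \<le> (2^p * x - real j) / 2^p"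
    by (simp_all add: divide_strict_right_mono)
  moreover have "u = (2^p * x - real j) / 2^p" unfolding u_def by (simp add: field_simps)
  ultimately have u: "0 \<le> u" "u < (1/2)^p" by (simp_all add: power_divide)
  have w: "(u, real k + y) \<in> PhiDom p"
  proof -
    have "k + 1 \<le> 2^p" using k by simp
    then have "real (k + 1) \<le> real (2^p)" by (simp only: of_nat_le_iff)
    then have "real k + y < 2^p" using xy by simp
    then show ?thesis using u xy by (auto simp: PhiDom_def)
  qed
  have fk: "\<lfloor>real k + y\<rfloor> = int k" using xy by (simp add: floor_eq_iff)
  have "Phi p (u, real k + y) = (u + real (Cr p k) / 2^p, frac (real k + y))"
    using Phi_formula[OF w] fk by simp
  also have "frac (real k + y) = y" using xy frac_add_int_left[of "real k" y] by (simp add: frac_eq)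
  then have "(u + real (Cr p k) / 2^p, frac (real k + y)) = z" using k xy z unfolding u_def by simp
  finally show ?thesis using w by blast
qed

lemma Phi_inv_eq: "w \<in> PhiDom p \<Longrightarrow> Phi p w = z \<Longrightarrow> Phi_inv p z = w"
  unfolding Phi_inv_def using inv_into_f_eq[OF Phi_inj] by blast

lemma phase: assumes "z \<in> M" "0 \<le> s"
  shows "Phi_inv p (flow s z) \<in> PhiDom p \<and> snd (Phi_inv p (flow s z)) = pm p (snd (Phi_inv p z) + s)"
proof -
  obtain w where w: "w \<in> PhiDom p" "Phi p w = z" using Phi_surj[OF assms(1)] by blast
  obtain u v where uv: "w = (u,v)" by force
  have iz: "Phi_inv p z = w" using Phi_inv_eq w by blast
  obtain u' where u': "flow s (Phi p (u,v)) = Phi p (u', pm p (v+s))" "(u', pm p (v+s)) \<in> PhiDom p"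
    using flow_Phi[of u v p s] w uv assms by auto
  have "Phi_inv p (flow s z) = (u', pm p (v+s))" using Phi_inv_eq u' w uv by metis
  then show ?thesis using iz uv u' by simp
qed



definition G :: "nat \<Rightarrow> real \<Rightarrow> real \<Rightarrow> real \<Rightarrow> real" where
  "G p a d v = (let L = d * 2 powr (real p - 1); H = 2 powr (real p - 1) in
     if 0 \<le> v \<and> v < L then a else if H \<le> v \<and> v < H + L then - a else 0)"

lemma powr_m1: "2 powr (real p - 1) = 2^p / (2::real)"
  by (simp add: powr_diff powr_realpow)

lemma powr_m2: "2 powr (real p - 2) = 2^p / (4::real)"
  by (simp add: powr_diff powr_realpow)

lemma block_G: "w \<in> PhiDom p \<Longrightarrow> block p a d w = G p a d (snd w)"
  by (simp add: block_def G_def Let_def)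

lemma pm_eq: assumes "0 \<le> x - 2^p * of_int k" "x - 2^p * of_int k < 2^p"
  shows "pm p x = x - 2^p * of_int k"
proof -
  have "of_int k \<le> x / 2^p" "x / 2^p < of_int k + 1" using assms by (simp_all add: field_simps)
  then have "\<lfloor>x / 2^p\<rfloor> = k" by (simp add: floor_eq_iff)
  then show ?thesis by (simp add: pm_def)
qed

lemma pm_decomp: "x = pm p x + 2^p * of_int \<lfloor>x / 2^p\<rfloor>"
  by (simp add: pm_def)

lemma G_anti: assumes "0 < d" "d < 1/2"
  shows "G p a d (pm p (w + 2^p/2)) = - G p a d (pm p w)"
proof -
  define r where "r = pm p w"
  define q where "q = \<lfloor>w / 2^p\<rfloor>"
  have r: "0 \<le> r" "r < 2^p" using pm_range unfolding r_def by auto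
  have wq: "w = r + 2^p * of_int q" unfolding r_def q_def by (rule pm_decomp)
  define H :: real where "H = 2^p/2"
  define L where "L = d * H"
  have HL: "0 < H" "0 < L" "L < H" using assms unfolding H_def L_def by auto
  have rH: "r < 2*H" using r unfolding H_def by simp
  have Gv: "G p a d v = (if 0 \<le> v \<and> v < L then a else if H \<le> v \<and> v < H + L then - a else 0)" for v
    unfolding G_def Let_def powr_m1 H_def L_def by simp
  show ?thesis
  proof (cases "r < H")
    case True
    have e: "w + 2^p/2 - 2^p * of_int q = r + H" using wq unfolding H_def by simp
    have "pm p (w + 2^p/2) = r + H"
      using pm_eq[of "w + 2^p/2" p q] e r True HL rH unfolding H_def by linarith
    then show ?thesis unfolding r_def[symmetric] Gv using True r HL by auto
  next
    case False
    have e: "w + 2^p/2 - 2^p * of_int (q+1) = r - H" using wq unfolding H_def by (simp add: algebra_simps)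
    have "pm p (w + 2^p/2) = r - H"
      using pm_eq[of "w + 2^p/2" p "q+1"] e r False HL rH unfolding H_def by linarith
    then show ?thesis unfolding r_def[symmetric] Gv using False r HL rH by auto
  qed
qed

lemma G_bound: "0 \<le> a \<Longrightarrow> \<bar>G p a d v\<bar> \<le> a"
  by (simp add: G_def Let_def)

lemma pm_meas: "pm p \<in> borel_measurable borel"
  unfolding pm_def[abs_def] by measurable

lemma G_meas0: "G p a d \<in> borel_measurable borel"
  unfolding G_def[abs_def] Let_def by measurable

lemma G_meas[measurable]: "(\<lambda>s. G p a d (pm p (V + s))) \<in> borel_measurable borel"
  using measurable_compose[OF measurable_compose[OF _ pm_meas] G_meas0, of "\<lambda>s. V + s"] by simp

lemma bdd_set_integrable:
  fixes h :: "real \<Rightarrow> real"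
  assumes "h \<in> borel_measurable borel" "\<And>s. \<bar>h s\<bar> \<le> B"
  shows "set_integrable lborel {x..y} h"
proof (rule set_integrable_bound[where f="\<lambda>_. B"])
  show "set_integrable lborel {x..y} (\<lambda>_. B)"
    by (rule borel_integrable_atLeastAtMost') simp
  show "set_borel_measurable lborel {x..y} h" using assms(1)
    unfolding set_borel_measurable_def by measurable
  show "AE s in lborel. s \<in> {x..y} \<longrightarrow> norm (h s) \<le> norm B"
  proof (rule AE_I2, rule impI)
    fix s have "\<bar>h s\<bar> \<le> B" by (rule assms(2))
    then show "norm (h s) \<le> norm B" by simp
  qed
qed

lemma bdd_integrable_on:
  fixes h :: "real \<Rightarrow> real"
  assumes "h \<in> borel_measurable borel" "\<And>s. \<bar>h s\<bar> \<le> B"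
  shows "h integrable_on {x..y}"
  using set_borel_integral_eq_integral(1)[OF bdd_set_integrable[OF assms]] .

lemma anti_integral_zero:
  fixes h :: "real \<Rightarrow> real"
  assumes "h \<in> borel_measurable borel" "\<And>s. \<bar>h s\<bar> \<le> B" "\<And>s. h (s + H) = - h s" "0 \<le> H"
  shows "integral {0..2*H*real N} h = 0"
proof (induction N)
  case 0 then show ?case by simp
next
  case (Suc N)
  define c where "c = 2*H*real N"
  have c0: "0 \<le> c" using assms(4) unfolding c_def by simp
  have i: "h integrable_on {x..y}" for x y using bdd_integrable_on[OF assms(1,2)] .
  have "integral {0..c+2*H} h = integral {0..c} h + integral {c..c+2*H} h"
    using Henstock_Kurzweil_Integration.integral_combine[of 0 c "c+2*H" h] c0 assms(4) i by simp
  also have "integral {c..c+2*H} h = integral {c..c+H} h + integral {c+H..c+H+H} h"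
    using Henstock_Kurzweil_Integration.integral_combine[of c "c+H" "c+2*H" h] assms(4) i by (simp add: algebra_simps)
  also have "integral {c+H..c+H+H} h = integral {c..c+H} (h \<circ> (+) H)"
    using integral_shift_Icc_real[of c "c+H" h H] by (simp add: algebra_simps)
  also have "h \<circ> (+) H = (\<lambda>s. - h s)" using assms(3) by (auto simp: add.commute)
  finally show ?case using Suc.IH unfolding c_def by (simp add: algebra_simps)
qed



definition Xk :: "nat \<Rightarrow> nat \<Rightarrow> real set" where
  "Xk p k = {real (Cr p k) / 2^p ..< real (Cr p k) / 2^p + (1/2)^p}"

definition Ik :: "nat \<Rightarrow> real \<Rightarrow> real \<Rightarrow> real set" where
  "Ik k \<alpha> \<beta> = {max 0 (\<alpha> - real k) ..< min 1 (\<beta> - real k)}"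

definition Dpart :: "nat \<Rightarrow> real \<Rightarrow> real \<Rightarrow> (real \<times> real) set" where
  "Dpart p \<alpha> \<beta> = (\<Union>k\<in>{..<2^p}. Xk p k \<times> Ik k \<alpha> \<beta>)"

lemma piece_good: assumes "k < 2^p" "z \<in> Xk p k \<times> Ik k \<alpha> \<beta>"
  shows "z \<in> M \<and> snd (Phi_inv p z) = real k + snd z \<and> snd (Phi_inv p z) \<in> {\<alpha>..<\<beta>}"
proof -
  obtain x y where z: "z = (x,y)" by force
  define c where "c = real (Cr p k) / 2^p"
  have x: "c \<le> x" "x < c + (1/2)^p" using assms z unfolding Xk_def c_def by auto
  have y: "0 \<le> y" "y < 1" "\<alpha> \<le> real k + y" "real k + y < \<beta>" using assms z unfolding Ik_def by auto
  have "Cr p k + 1 \<le> 2^p" using Cr_lt[of p k] by simp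
  then have "real (Cr p k + 1) \<le> real (2^p)" by (simp only: of_nat_le_iff)
  then have "real (Cr p k) + 1 \<le> 2^p" by simp
  then have "(real (Cr p k) + 1) / 2^p \<le> 1" by simp
  then have c1: "c + (1/2)^p \<le> 1" unfolding c_def by (simp add: power_divide add_divide_distrib)
  have c0: "0 \<le> c" unfolding c_def by simp
  have "k + 1 \<le> 2^p" using assms(1) by simp
  then have "real (k + 1) \<le> real (2^p)" by (simp only: of_nat_le_iff)
  then have ky: "real k + y < 2^p" using y by simp
  have w: "(x - c, real k + y) \<in> PhiDom p" using x y ky unfolding PhiDom_def by auto
  have fk: "\<lfloor>real k + y\<rfloor> = int k" using y by (simp add: floor_eq_iff)
  have "frac (real k + y) = y" using y frac_add_int_left[of "real k" y] by (simp add: frac_eq)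
  then have "Phi p (x - c, real k + y) = z" using Phi_formula[OF w] fk z unfolding c_def by simp
  then have "Phi_inv p z = (x - c, real k + y)" using Phi_inv_eq[OF w] by simp
  moreover have "z \<in> M" using x y c0 c1 z unfolding M_def by auto
  ultimately show ?thesis using y z by simp
qed

lemma Dpart_good: "z \<in> Dpart p \<alpha> \<beta> \<Longrightarrow> z \<in> M \<and> snd (Phi_inv p z) \<in> {\<alpha>..<\<beta>}"
  unfolding Dpart_def using piece_good by blast

lemma box_emeasure: assumes "0 \<le> e"
  shows "emeasure lborel ({a..<a+e} \<times> {b1..<b2}) = ennreal (e * max 0 (b2 - b1))"
proof (cases "b1 \<le> b2")
  case True
  have "emeasure lborel ({a..<a+e} \<times> {b1..<b2}) = emeasure (lborel \<Otimes>\<^sub>M lborel) ({a..<a+e} \<times> {b1..<b2})"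
    by (simp add: lborel_prod)
  also have "\<dots> = emeasure lborel {a..<a+e} * emeasure lborel {b1..<b2}"
    by (rule lborel.emeasure_pair_measure_Times) auto
  also have "\<dots> = ennreal (e * max 0 (b2 - b1))" using True assms by (simp add: ennreal_mult)
  finally show ?thesis .
next
  case False then show ?thesis by simp
qed

lemma box_sets: "A \<in> sets lborel \<Longrightarrow> B \<in> sets lborel \<Longrightarrow> (A \<times> B :: (real \<times> real) set) \<in> sets lborel"
  by (subst lborel_prod[symmetric]) (rule pair_measureI)

lemma sum_overlap: assumes "0 \<le> \<alpha>" "\<alpha> \<le> \<beta>"
  shows "(\<Sum>k<N. max 0 (min 1 (\<beta> - real k) - max 0 (\<alpha> - real k))) = min (real N) \<beta> - min (real N) \<alpha>"
proof (induction N)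
  case 0 then show ?case using assms by simp
next
  case (Suc N)
  have "max 0 (min 1 (\<beta> - real N) - max 0 (\<alpha> - real N)) = (min (real N + 1) \<beta> - min (real N + 1) \<alpha>) - (min (real N) \<beta> - min (real N) \<alpha>)"
    using assms by (simp add: min_def max_def)
  then show ?case using Suc.IH by (simp add: add.commute)
qed

lemma Dpart_sets: "Dpart p \<alpha> \<beta> \<in> sets lborel"
  unfolding Dpart_def Xk_def Ik_def by (intro sets.finite_UN box_sets) auto

lemma Dpart_measure: assumes "0 \<le> \<alpha>" "\<alpha> \<le> \<beta>" "\<beta> \<le> 2^p"
  shows "measure lborel (Dpart p \<alpha> \<beta>) = (\<beta> - \<alpha>) / 2^p"
proof -
  let ?F = "\<lambda>k. Xk p k \<times> Ik k \<alpha> \<beta>"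
  have em: "emeasure lborel (?F k) = ennreal ((1/2)^p * max 0 (min 1 (\<beta> - real k) - max 0 (\<alpha> - real k)))" for k
    unfolding Xk_def Ik_def by (rule box_emeasure) simp
  have fm: "?F k \<in> fmeasurable lborel" for k
    unfolding fmeasurable_def using em[of k] box_sets[of "Xk p k" "Ik k \<alpha> \<beta>"]
    by (auto simp: Xk_def Ik_def)
  have disj: "pairwise (\<lambda>i j. disjnt (?F i) (?F j)) {..<2^p}"
  proof (rule pairwiseI)
    fix i j :: nat assume i: "i \<in> {..<2^p}" and j: "j \<in> {..<2^p}" and ij: "i \<noteq> j"
    show "disjnt (?F i) (?F j)" unfolding disjnt_def
    proof (rule equals0I)
      fix z assume "z \<in> ?F i \<inter> ?F j"
      then have zi: "z \<in> ?F i" and zj: "z \<in> ?F j" by auto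
      have "snd (Phi_inv p z) = real i + snd z" "snd (Phi_inv p z) = real j + snd z"
        using piece_good[OF _ zi] piece_good[OF _ zj] i j by auto
      then show False using ij by simp
    qed
  qed
  have "measure lborel (Dpart p \<alpha> \<beta>) = (\<Sum>k<2^p. measure lborel (?F k))"
    unfolding Dpart_def by (rule measure_UNION') (use fm disj in auto)
  also have "\<dots> = (\<Sum>k<2^p. (1/2)^p * max 0 (min 1 (\<beta> - real k) - max 0 (\<alpha> - real k)))"
    using em by (simp add: measure_def)
  also have "\<dots> = (1/2)^p * (min (2^p) \<beta> - min (2^p) \<alpha>)"
    using sum_overlap[OF assms(1,2), of "2^p"] by (simp add: sum_distrib_left[symmetric])
  also have "\<dots> = (\<beta> - \<alpha>) / 2^p" using assms by (simp add: power_divide)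
  finally show ?thesis .
qed



lemma G_simp: "G p a d v = (if 0 \<le> v \<and> v < d*(2^p/2) then a else if 2^p/2 \<le> v \<and> v < 2^p/2 + d*(2^p/2) then -a else 0)"
  unfolding G_def Let_def powr_m1 by simp

lemma ind_integral: fixes c :: real assumes "0 \<le> e" "0 \<le> L" "e + L \<le> T"
  shows "(LINT s:{0..T}|lborel. c * indicator {e..<e+L} s) = c * L"
proof -
  have "(\<lambda>s. indicator {0..T} s *\<^sub>R (c * indicator {e..<e+L} s)) = (\<lambda>s. c * indicator {e..<e+L} s :: real)"
    using assms by (auto simp: indicator_def fun_eq_iff)
  then have "(LINT s:{0..T}|lborel. c * indicator {e..<e+L} s) = (\<integral>s. c * indicator {e..<e+L} s \<partial>lborel)"
    unfolding set_lebesgue_integral_def by simp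
  also have "\<dots> = c * (\<integral>s. indicator {e..<e+L} s \<partial>lborel)" by simp
  also have "\<dots> = c * L" using assms by simp
  finally show ?thesis .
qed

lemma case2: assumes d: "0 < d" "d < 1/2"
  and V: "2^p - (2^p/2)/2 + d*(2^p/2) \<le> V" "V < 2^p"
  shows "(LINT s:{0..(2^p/2)/2}|lborel. G p a d (pm p (V+s))) = a * (d*(2^p/2))"
proof -
  define H :: real where "H = 2^p/2"
  define L where "L = d*H"
  have P: "(2::real)^p = 2*H" unfolding H_def by simp
  have HL: "0 < H" "0 < L" "L < H/2" using d unfolding H_def L_def by auto
  have Gv: "G p a d v = (if 0 \<le> v \<and> v < L then a else if H \<le> v \<and> v < H + L then - a else 0)" for v
    unfolding G_simp H_def L_def by simp
  have V': "2*H - H/2 + L \<le> V" "V < 2*H" using V unfolding L_def H_def by auto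
  have eq: "G p a d (pm p (V+s)) = a * indicator {2*H - V..<2*H - V + L} s" if s: "s \<in> {0..H/2}" for s
  proof (cases "V + s < 2*H")
    case True
    have "pm p (V+s) = V + s" using pm_eq[of "V+s" p 0] True V' s HL P by simp
    then show ?thesis unfolding Gv using True V' s HL
      by (auto simp: indicator_def)
  next
    case False
    have "pm p (V+s) = V + s - 2*H" using pm_eq[of "V+s" p 1] False V' s HL P by simp
    then show ?thesis unfolding Gv using False V' s HL
      by (auto simp: indicator_def)
  qed
  have "(LINT s:{0..H/2}|lborel. G p a d (pm p (V+s))) = (LINT s:{0..H/2}|lborel. a * indicator {2*H - V..<2*H - V + L} s)"
    by (rule set_lebesgue_integral_cong) (use eq in auto)
  also have "\<dots> = a * L" by (rule ind_integral) (use V' HL in auto)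
  finally show ?thesis unfolding H_def L_def .
qed

lemma case1: assumes d: "0 < d" "d < 1/2"
  and V: "(2^p/2)/2 + d*(2^p/2) \<le> V" "V < 2^p/2"
  shows "(LINT s:{0..(2^p/2)/2}|lborel. G p a d (pm p (V+s))) = - a * (d*(2^p/2))"
proof -
  define H :: real where "H = 2^p/2"
  define L where "L = d*H"
  have P: "(2::real)^p = 2*H" unfolding H_def by simp
  have HL: "0 < H" "0 < L" "L < H/2" using d unfolding H_def L_def by auto
  have Gv: "G p a d v = (if 0 \<le> v \<and> v < L then a else if H \<le> v \<and> v < H + L then - a else 0)" for v
    unfolding G_simp H_def L_def by simp
  have V': "H/2 + L \<le> V" "V < H" using V unfolding L_def H_def by auto
  have eq: "G p a d (pm p (V+s)) = - a * indicator {H - V..<H - V + L} s" if s: "s \<in> {0..H/2}" for s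
  proof -
    have "pm p (V+s) = V + s" using pm_eq[of "V+s" p 0] V' s HL P by simp
    then show ?thesis unfolding Gv using V' s HL
      by (auto simp: indicator_def)
  qed
  have "(LINT s:{0..H/2}|lborel. G p a d (pm p (V+s))) = (LINT s:{0..H/2}|lborel. - a * indicator {H - V..<H - V + L} s)"
    by (rule set_lebesgue_integral_cong) (use eq in auto)
  also have "\<dots> = - a * L" by (rule ind_integral) (use V' HL in auto)
  finally show ?thesis unfolding H_def L_def .
qed



lemma p_mono: assumes "\<And>n. p (Suc n) \<ge> p n + (2::nat)" shows "m < n \<Longrightarrow> p m + 2 \<le> p n"
proof (induction n)
  case 0 then show ?case by simp
next
  case (Suc n)
  then show ?case using assms[of n] by (cases "m = n") auto
qed

lemma avg_main:
  fixes p :: "nat \<Rightarrow> nat" and a d :: "nat \<Rightarrow> real"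
  assumes p_gap: "\<And>n. p (Suc n) \<ge> p n + 2"
    and d_range: "\<And>n. 0 < d n \<and> d n < 1/2"
    and a_pos: "\<And>n. a n > 0"
    and a_summable: "summable a"
    and z: "z \<in> M"
    and Vc: "(2^p n/2)/2 + d n*(2^p n/2) \<le> snd (Phi_inv (p n) z) \<and> snd (Phi_inv (p n) z) < 2^p n/2
          \<or> 2^p n - (2^p n/2)/2 + d n*(2^p n/2) \<le> snd (Phi_inv (p n) z) \<and> snd (Phi_inv (p n) z) < 2^p n"
  shows "\<bar>\<bar>avg (bigf p a d) (2 powr (real (p n) - 2)) z\<bar> - 2 * a n * d n\<bar> \<le> (\<Sum>m. a (m + Suc n))"
proof -
  define V where "V m = snd (Phi_inv (p m) z)" for m
  define hh where "hh m s = G (p m) (a m) (d m) (pm (p m) (V m + s))" for m s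
  define T :: real where "T = (2^p n/2)/2"
  define R where "R s = (\<Sum>i. hh (i + Suc n) s)" for s
  define eps where "eps = (\<Sum>m. a (m + Suc n))"
  have T0: "0 < T" unfolding T_def by simp
  have tT: "2 powr (real (p n) - 2) = T" unfolding T_def powr_m2 by simp
  have hb: "\<bar>hh m s\<bar> \<le> a m" for m s unfolding hh_def using G_bound a_pos less_imp_le by blast
  have hm[measurable]: "hh m \<in> borel_measurable borel" for m unfolding hh_def[abs_def] by (rule G_meas)
  have hi: "hh m integrable_on {x..y}" for m x y by (rule bdd_integrable_on[OF hm hb])
  have hs: "summable (\<lambda>m. hh m s)" for s
    by (rule summable_rabs_cancel, rule summable_comparison_test[OF _ a_summable]) (use hb in auto)
  have as: "summable (\<lambda>i. a (i + Suc n))" using a_summable by (rule summable_ignore_initial_segment)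
  have Rm[measurable]: "R \<in> borel_measurable borel" unfolding R_def[abs_def] by measurable
  have Rb: "\<bar>R s\<bar> \<le> eps" for s
  proof -
    have s1: "summable (\<lambda>i. \<bar>hh (i + Suc n) s\<bar>)"
      by (rule summable_comparison_test[OF _ as]) (use hb in auto)
    have "\<bar>R s\<bar> \<le> (\<Sum>i. \<bar>hh (i + Suc n) s\<bar>)" unfolding R_def using summable_norm[of "\<lambda>i. hh (i + Suc n) s"] s1 by simp
    also have "\<dots> \<le> eps" unfolding eps_def by (rule suminf_le) (use hb s1 as in auto)
    finally show ?thesis .
  qed
  have Ri: "R integrable_on {x..y}" for x y by (rule bdd_integrable_on[OF Rm Rb])
  have pt: "bigf p a d (flow s z) = (\<Sum>m<n. hh m s) + hh n s + R s" if s: "s \<in> {0..T}" for s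
  proof -
    have "bigf p a d (flow s z) = (\<Sum>m. hh m s)"
      unfolding bigf_def
    proof (rule arg_cong[where f=suminf], rule ext)
      fix m
      have ph: "Phi_inv (p m) (flow s z) \<in> PhiDom (p m) \<and> snd (Phi_inv (p m) (flow s z)) = pm (p m) (V m + s)"
        using phase[OF z, of s "p m"] s unfolding V_def by auto
      then show "block (p m) (a m) (d m) (Phi_inv (p m) (flow s z)) = hh m s"
        unfolding hh_def using block_G by simp
    qed
    also have "\<dots> = R s + (\<Sum>m<Suc n. hh m s)" unfolding R_def by (rule suminf_split_initial_segment[OF hs])
    finally show ?thesis by simp
  qed
  have F: "(\<lambda>s. (\<Sum>m<n. hh m s) + hh n s + R s) \<in> borel_measurable borel" by measurable
  have Fb: "\<bar>(\<Sum>m<n. hh m s) + hh n s + R s\<bar> \<le> (\<Sum>m<n. a m) + a n + eps" for s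
  proof -
    have "\<bar>(\<Sum>m<n. hh m s)\<bar> \<le> (\<Sum>m<n. \<bar>hh m s\<bar>)" by (rule sum_abs)
    also have "\<dots> \<le> (\<Sum>m<n. a m)" by (rule sum_mono) (use hb in auto)
    finally show ?thesis using hb[of n s] Rb[of s] by linarith
  qed
  have "(LINT s:{0..T}|lborel. bigf p a d (flow s z)) = (LINT s:{0..T}|lborel. (\<Sum>m<n. hh m s) + hh n s + R s)"
    by (rule set_lebesgue_integral_cong) (use pt in auto)
  also have "\<dots> = integral {0..T} (\<lambda>s. (\<Sum>m<n. hh m s) + hh n s + R s)"
    by (rule set_borel_integral_eq_integral(2)[OF bdd_set_integrable[OF F Fb]])
  also have "\<dots> = integral {0..T} (\<lambda>s. (\<Sum>m<n. hh m s) + hh n s) + integral {0..T} R"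
  proof (rule integral_add)
    have "(\<lambda>s. \<Sum>m<n. hh m s) integrable_on {0..T}" by (rule integrable_sum) (use hi in auto)
    then show "(\<lambda>s. (\<Sum>m<n. hh m s) + hh n s) integrable_on {0..T}" using hi by (rule integrable_add)
  qed (rule Ri)
  also have "integral {0..T} (\<lambda>s. (\<Sum>m<n. hh m s) + hh n s) = integral {0..T} (\<lambda>s. \<Sum>m<n. hh m s) + integral {0..T} (hh n)"
  proof (rule integral_add)
    show "(\<lambda>s. \<Sum>m<n. hh m s) integrable_on {0..T}" by (rule integrable_sum) (use hi in auto)
  qed (rule hi)
  also have "integral {0..T} (\<lambda>s. \<Sum>m<n. hh m s) = (\<Sum>m<n. integral {0..T} (hh m))"
    by (rule integral_sum) (use hi in auto)
  finally have I1: "(LINT s:{0..T}|lborel. bigf p a d (flow s z)) = (\<Sum>m<n. integral {0..T} (hh m)) + integral {0..T} (hh n) + integral {0..T} R" .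
  have low: "integral {0..T} (hh m) = 0" if m: "m < n" for m
  proof -
    have pm2: "p m + 2 \<le> p n" using p_mono[of p, OF p_gap m] .
    define H :: real where "H = 2^p m / 2"
    define N :: nat where "N = 2^(p n - p m - 2)"
    define k where "k = p n - p m - 2"
    have pk: "p n = p m + k + 2" unfolding k_def using pm2 by simp
    have "(2::real)^p n = 2^(p m + k + 2)" by (simp only: pk)
    also have "\<dots> = 2^(p m) * 2^k * 4" by (simp add: power_add)
    finally have e4: "(2::real)^p n = 2^(p m) * 2^k * 4" .
    have rN: "real N = 2^k" unfolding N_def k_def by simp
    have TN: "T = 2 * H * real N" unfolding T_def H_def rN e4 by simp
    have anti: "hh m (s + H) = - hh m s" for s
      unfolding hh_def H_def using G_anti[of "d m" "p m" "a m" "V m + s"] d_range[of m] by (simp add: add.assoc)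
    have H0: "0 \<le> H" unfolding H_def by simp
    show ?thesis unfolding TN
      using anti_integral_zero[where h="hh m" and B="a m" and H=H and N=N] hm hb anti H0 by blast
  qed
  have top: "\<exists>\<sigma>::real. \<bar>\<sigma>\<bar> = 1 \<and> integral {0..T} (hh n) = \<sigma> * (a n * (d n * (2^p n/2)))"
  proof -
    have "integral {0..T} (hh n) = (LINT s:{0..T}|lborel. hh n s)"
      by (rule set_borel_integral_eq_integral(2)[OF bdd_set_integrable[OF hm hb], symmetric])
    moreover have "(LINT s:{0..T}|lborel. hh n s) = a n * (d n * (2^p n/2)) \<or> (LINT s:{0..T}|lborel. hh n s) = - a n * (d n * (2^p n/2))"
      using Vc case1[of "d n" "p n" "V n" "a n"] case2[of "d n" "p n" "V n" "a n"] d_range[of n]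
      unfolding hh_def T_def V_def by auto
    ultimately have "integral {0..T} (hh n) = 1 * (a n * (d n * (2^p n/2))) \<or> integral {0..T} (hh n) = (-1) * (a n * (d n * (2^p n/2)))"
      by simp
    then show ?thesis
    proof
      assume "integral {0..T} (hh n) = 1 * (a n * (d n * (2^p n/2)))"
      then show ?thesis by (intro exI[of _ 1]) simp
    next
      assume "integral {0..T} (hh n) = (-1) * (a n * (d n * (2^p n/2)))"
      then show ?thesis by (intro exI[of _ "-1"]) simp
    qed
  qed
  then obtain \<sigma> :: real where sg: "\<bar>\<sigma>\<bar> = 1" "integral {0..T} (hh n) = \<sigma> * (a n * (d n * (2^p n/2)))" by blast
  have IR: "\<bar>integral {0..T} R\<bar> \<le> eps * T"
  proof -
    have e0: "0 \<le> eps" unfolding eps_def by (rule suminf_nonneg[OF as]) (use a_pos less_imp_le in auto)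
    have "norm (integral (cbox 0 T) R) \<le> eps * Henstock_Kurzweil_Integration.content (cbox 0 T)"
      by (rule has_integral_bound[OF e0]) (use Ri Rb in auto)
    then show ?thesis using T0 by simp
  qed
  have s0: "(\<Sum>m<n. integral {0..T} (hh m)) = 0" by (rule sum.neutral) (use low in auto)
  have "avg (bigf p a d) (2 powr (real (p n) - 2)) z = (1/T) * (\<sigma> * (a n * (d n * (2^p n/2))) + integral {0..T} R)"
    unfolding avg_def tT I1 s0 sg(2) by simp
  also have "\<dots> = \<sigma> * (a n * (d n * (2^p n/2))) / T + integral {0..T} R / T" by (simp add: add_divide_distrib)
  also have "\<sigma> * (a n * (d n * (2^p n/2))) / T = \<sigma> * (2 * a n * d n)" unfolding T_def by simp
  finally have avgeq: "avg (bigf p a d) (2 powr (real (p n) - 2)) z = \<sigma> * (2 * a n * d n) + integral {0..T} R / T" .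
  have "\<bar>avg (bigf p a d) (2 powr (real (p n) - 2)) z - \<sigma> * (2 * a n * d n)\<bar> \<le> eps"
  proof -
    have "\<bar>integral {0..T} R / T\<bar> = \<bar>integral {0..T} R\<bar> / T" using T0 by (simp add: abs_divide)
    also have "\<dots> \<le> eps" using IR T0 by (simp add: divide_le_eq)
    finally show ?thesis unfolding avgeq by simp
  qed
  moreover have "\<bar>\<sigma> * (2 * a n * d n)\<bar> = 2 * a n * d n" using sg(1) a_pos[of n] d_range[of n]
    by (simp add: abs_mult)
  ultimately show ?thesis unfolding eps_def by linarith
qed



lemma Dpart_fin: "emeasure lborel (Dpart p \<alpha> \<beta>) \<noteq> \<infinity>"
proof -
  have e: "cbox (0::real,0::real) (1,1) = {0..1} \<times> {0..1}" by (simp add: cbox_Pair_eq)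
  have sub: "Dpart p \<alpha> \<beta> \<subseteq> cbox (0::real,0::real) (1,1)" unfolding e using Dpart_good unfolding M_def by fastforce
  have "emeasure lborel (Dpart p \<alpha> \<beta>) \<le> emeasure lborel (cbox (0::real,0::real) (1,1))"
    by (rule emeasure_mono[OF sub]) simp
  also have "\<dots> < \<infinity>" by (rule emeasure_lborel_cbox_finite)
  finally show ?thesis by simp
qed

theorem mainTheorem4:
  fixes p :: "nat \<Rightarrow> nat" and a d :: "nat \<Rightarrow> real"
  assumes p_gap: "\<And>n. p (Suc n) \<ge> p n + 2"
    and d_range: "\<And>n. 0 < d n \<and> d n < 1/2"
    and a_pos: "\<And>n. a n > 0"
    and a_summable: "summable a"
    and tail: "(\<lambda>n. \<Sum>m. a (m + Suc n)) \<in> o(\<lambda>n. a n * d n)"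
    and scale: "\<And>n m. n < m \<Longrightarrow> 2 powr (real (p n) - 2) < d m * 2 powr (real (p m) - 1)"
  shows "\<exists>D :: nat \<Rightarrow> (real \<times> real) set.
           (\<forall>n. D n \<in> sets lborel \<and> D n \<subseteq> M \<and> measure lborel (D n) = 1/2 - d n) \<and>
           (\<exists>\<epsilon> :: nat \<Rightarrow> real. \<epsilon> \<in> o(\<lambda>n. a n * d n) \<and>
              (\<forall>n. \<forall>z\<in>D n.
                 \<bar>\<bar>avg (bigf p a d) (2 powr (real (p n) - 2)) z\<bar> - 2 * a n * d n\<bar> \<le> \<epsilon> n))"
proof -
  define A1 where "A1 n = Dpart (p n) ((2^p n/2)/2 + d n*(2^p n/2)) (2^p n/2)" for n
  define A2 where "A2 n = Dpart (p n) (2^p n - (2^p n/2)/2 + d n*(2^p n/2)) (2^p n)" for n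
  define D where "D n = A1 n \<union> A2 n" for n
  have part1: "D n \<in> sets lborel \<and> D n \<subseteq> M \<and> measure lborel (D n) = 1/2 - d n" for n
  proof -
    define H :: real where "H = 2^p n/2"
    define L where "L = d n * H"
    have HL: "0 < H" "0 < L" "L < H/2" "2^p n = 2*H" using d_range[of n] unfolding H_def L_def by auto
    have s: "A1 n \<in> sets lborel" "A2 n \<in> sets lborel" unfolding A1_def A2_def by (rule Dpart_sets)+
    have sub: "D n \<subseteq> M" unfolding D_def A1_def A2_def using Dpart_good by blast
    have disj: "A1 n \<inter> A2 n = {}"
    proof (rule equals0I)
      fix z assume z: "z \<in> A1 n \<inter> A2 n"
      then have z1: "z \<in> Dpart (p n) ((2^p n/2)/2 + d n*(2^p n/2)) (2^p n/2)" unfolding A1_def by blast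
      have z2: "z \<in> Dpart (p n) (2^p n - (2^p n/2)/2 + d n*(2^p n/2)) (2^p n)" using z unfolding A2_def by blast
      have v1: "snd (Phi_inv (p n) z) < 2^p n/2" using Dpart_good[OF z1] by simp
      have v2: "2^p n - (2^p n/2)/2 + d n*(2^p n/2) \<le> snd (Phi_inv (p n) z)" using Dpart_good[OF z2] by simp
      have "0 \<le> d n*(2^p n/2)" using d_range[of n] by simp
      moreover have "(0::real) < 2^p n" by simp
      ultimately show False using v1 v2 by linarith
    qed
    have m1: "measure lborel (A1 n) = (H - (H/2 + L)) / 2^p n"
      unfolding A1_def H_def[symmetric] L_def[symmetric] by (rule Dpart_measure) (use HL in auto)
    have m2: "measure lborel (A2 n) = (2^p n - (2^p n - H/2 + L)) / 2^p n"
      unfolding A2_def H_def[symmetric] L_def[symmetric] by (rule Dpart_measure) (use HL in auto)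
    have "measure lborel (D n) = measure lborel (A1 n) + measure lborel (A2 n)"
      unfolding D_def by (rule measure_Union) (use s disj Dpart_fin in \<open>auto simp: A1_def A2_def\<close>)
    also have "\<dots> = (H - 2*L) / (2*H)" unfolding m1 m2 HL(4) by (simp add: field_simps)
    also have "\<dots> = 1/2 - d n" unfolding L_def using HL by (simp add: field_simps)
    finally show ?thesis using s sub unfolding D_def by auto
  qed
  have part2: "\<bar>\<bar>avg (bigf p a d) (2 powr (real (p n) - 2)) z\<bar> - 2 * a n * d n\<bar> \<le> (\<Sum>m. a (m + Suc n))"
    if z: "z \<in> D n" for n z
  proof (rule avg_main[where p=p and a=a and d=d, OF p_gap d_range a_pos a_summable])
    show "z \<in> M" using part1[of n] z by auto
    show "(2^p n/2)/2 + d n*(2^p n/2) \<le> snd (Phi_inv (p n) z) \<and> snd (Phi_inv (p n) z) < 2^p n/2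
          \<or> 2^p n - (2^p n/2)/2 + d n*(2^p n/2) \<le> snd (Phi_inv (p n) z) \<and> snd (Phi_inv (p n) z) < 2^p n"
      using z Dpart_good unfolding D_def A1_def A2_def by fastforce
  qed
  show ?thesis
    by (rule exI[of _ D], rule conjI, use part1 in blast, rule exI[of _ "\<lambda>n. \<Sum>m. a (m + Suc n)"])
       (use tail part2 in auto)
qed


end
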